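(* Let $X$ be a complex Banach space with $\dim X\geq2$, let $\mathcal{A}\subseteq\mathcal{B}(X)$ be a standard operator algebra, let $r,s$ be nonnegative integers with $r+s\geq1$, and let $A\in\mathcal{A}$ be nonzero. The following are equivalent: (1) $A$ has rank one; (2) for every $B\in\mathcal{A}$, $\sigma_\pi(B^rAB^s)$ is a singleton; (3) for every $B\in\mathcal{A}$ with $\operatorname{rank}(B)\leq2$, $\sigma_\pi(B^rAB^s)$ is a singleton.
   Context: A standard operator algebra on a complex Banach space $X$ is a subalgebra of $\mathcal{B}(X)$ containing all finite rank operators; it need not be closed or unital. The peripheral spectrum of $T\in\mathcal{B}(X)$ is $\sigma_\pi(T)=\{z\in\sigma(T):|z|=r(T)\}$, where $\sigma(T)$ is the spectrum and $r(T)$ the spectral radius. *)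

theory Defs
  imports "HOL-Analysis.Analysis"
begin

class complex_banach = banach +
  fixes scaleC :: "complex \<Rightarrow> 'a \<Rightarrow> 'a"
  assumes scaleC_of_real: "scaleC (complex_of_real r) x = scaleR r x"
    and scaleC_add_right: "scaleC a (x + y) = scaleC a x + scaleC a y"
    and scaleC_add_left: "scaleC (a + b) x = scaleC a x + scaleC b x"
    and scaleC_scaleC: "scaleC a (scaleC b x) = scaleC (a * b) x"
    and norm_scaleC: "norm (scaleC a x) = cmod a * norm x"

definition clinear :: "('a::complex_banach \<Rightarrow> 'b::complex_banach) \<Rightarrow> bool" where
  "clinear f \<longleftrightarrow> (\<forall>x y. f (x + y) = f x + f y) \<and> (\<forall>c x. f (scaleC c x) = scaleC c (f x))"

definition bounded_clinear :: "('a::complex_banach \<Rightarrow> 'b::complex_banach) \<Rightarrow> bool" where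
  "bounded_clinear f \<longleftrightarrow> clinear f \<and> (\<exists>K. \<forall>x. norm (f x) \<le> norm x * K)"

definition cspan :: "'a::complex_banach set \<Rightarrow> 'a set" where
  "cspan S = {x. \<exists>F c. finite F \<and> F \<subseteq> S \<and> x = (\<Sum>v\<in>F. scaleC (c v) v)}"

definition rank_le :: "('a::complex_banach \<Rightarrow> 'a) \<Rightarrow> nat \<Rightarrow> bool" where
  "rank_le T n \<longleftrightarrow> (\<exists>F. finite F \<and> card F \<le> n \<and> range T \<subseteq> cspan F)"

definition rank_one :: "('a::complex_banach \<Rightarrow> 'a) \<Rightarrow> bool" where
  "rank_one T \<longleftrightarrow> rank_le T 1 \<and> \<not> rank_le T 0"

definition finite_rank :: "('a::complex_banach \<Rightarrow> 'a) \<Rightarrow> bool" where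
  "finite_rank T \<longleftrightarrow> (\<exists>n. rank_le T n)"

definition cdim_ge2 :: "'a::complex_banach itself \<Rightarrow> bool" where
  "cdim_ge2 _ \<longleftrightarrow> \<not> (\<exists>F::'a set. finite F \<and> card F \<le> 1 \<and> UNIV \<subseteq> cspan F)"

definition invertible_op :: "('a::complex_banach \<Rightarrow> 'a) \<Rightarrow> bool" where
  "invertible_op T \<longleftrightarrow> (\<exists>S. bounded_clinear S \<and> S \<circ> T = id \<and> T \<circ> S = id)"

definition op_spectrum :: "('a::complex_banach \<Rightarrow> 'a) \<Rightarrow> complex set" where
  "op_spectrum T = {z. \<not> invertible_op (\<lambda>x. T x - scaleC z x)}"

definition spectral_radius :: "('a::complex_banach \<Rightarrow> 'a) \<Rightarrow> real" where
  "spectral_radius T = Sup (cmod ` op_spectrum T)"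

definition peripheral_spectrum :: "('a::complex_banach \<Rightarrow> 'a) \<Rightarrow> complex set" where
  "peripheral_spectrum T = {z \<in> op_spectrum T. cmod z = spectral_radius T}"

definition standard_operator_algebra :: "('a::complex_banach \<Rightarrow> 'a) set \<Rightarrow> bool" where
  "standard_operator_algebra \<A> \<longleftrightarrow>
     (\<forall>T\<in>\<A>. bounded_clinear T) \<and>
     (\<forall>S\<in>\<A>. \<forall>T\<in>\<A>. (\<lambda>x. S x + T x) \<in> \<A>) \<and>
     (\<forall>c. \<forall>T\<in>\<A>. (\<lambda>x. scaleC c (T x)) \<in> \<A>) \<and>
     (\<forall>S\<in>\<A>. \<forall>T\<in>\<A>. S \<circ> T \<in> \<A>) \<and>
     (\<forall>T. bounded_clinear T \<and> finite_rank T \<longrightarrow> T \<in> \<A>)"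

end

theory Submission
  imports Defs
begin


definition hb_ok :: "'a::real_normed_vector \<Rightarrow> ('a \<times> real) set \<Rightarrow> bool" where
  "hb_ok w G \<longleftrightarrow> (0,0) \<in> G \<and>
     (\<forall>x a y b. (x,a) \<in> G \<longrightarrow> (y,b) \<in> G \<longrightarrow> (x+y, a+b) \<in> G) \<and>
     (\<forall>x a r. (x,a) \<in> G \<longrightarrow> (r *\<^sub>R x, r*a) \<in> G) \<and>
     (\<forall>a. (0,a) \<in> G \<longrightarrow> a = 0) \<and>
     (\<forall>x a. (x,a) \<in> G \<longrightarrow> a \<le> norm x) \<and> (w, norm w) \<in> G"

lemma hb_base:
  assumes "w \<noteq> 0"
  shows "hb_ok w {(t *\<^sub>R w, t * norm w) | t. True}"
  unfolding hb_ok_def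
proof (intro conjI allI impI)
  show "(0,0) \<in> {(t *\<^sub>R w, t * norm w) | t. True}"
    by (rule CollectI, rule exI[of _ 0]) simp
  show "(w, norm w) \<in> {(t *\<^sub>R w, t * norm w) | t. True}"
    by (rule CollectI, rule exI[of _ 1]) simp
next
  fix x a y b assume "(x,a) \<in> {(t *\<^sub>R w, t * norm w) | t. True}" "(y,b) \<in> {(t *\<^sub>R w, t * norm w) | t. True}"
  then obtain t s where "x = t *\<^sub>R w" "a = t * norm w" "y = s *\<^sub>R w" "b = s * norm w" by blast
  then show "(x+y, a+b) \<in> {(t *\<^sub>R w, t * norm w) | t. True}"
    by (intro CollectI exI[of _ "t+s"]) (simp add: algebra_simps)
next
  fix x a r assume "(x,a) \<in> {(t *\<^sub>R w, t * norm w) | t. True}"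
  then obtain t where "x = t *\<^sub>R w" "a = t * norm w" by blast
  then show "(r *\<^sub>R x, r*a) \<in> {(t *\<^sub>R w, t * norm w) | t. True}"
    by (intro CollectI exI[of _ "r*t"]) (simp add: algebra_simps)
next
  fix a assume "(0,a) \<in> {(t *\<^sub>R w, t * norm w) | t. True}"
  then obtain t where "0 = t *\<^sub>R w" "a = t * norm w" by blast
  then show "a = 0" using assms by simp
next
  fix x a assume "(x,a) \<in> {(t *\<^sub>R w, t * norm w) | t. True}"
  then obtain t where "x = t *\<^sub>R w" "a = t * norm w" by blast
  then show "a \<le> norm x" by (simp add: mult_right_mono)
qed

lemma hb_chain:
  assumes "w \<noteq> 0"
  shows "\<exists>M\<in>{G. hb_ok w G}. \<forall>X\<in>{G. hb_ok w G}. M \<subseteq> X \<longrightarrow> X = M"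
proof (rule Zorn_Lemma2, intro ballI)
  fix C assume C: "C \<in> chains {G. hb_ok w G}"
  show "\<exists>U\<in>{G. hb_ok w G}. \<forall>X\<in>C. X \<subseteq> U"
  proof (cases "C = {}")
    case True
    then show ?thesis using hb_base[OF assms] by blast
  next
    case False
    have sub: "C \<subseteq> {G. hb_ok w G}" and ch: "\<forall>X\<in>C. \<forall>Y\<in>C. X \<subseteq> Y \<or> Y \<subseteq> X"
      using C unfolding chains_def chain_subset_def by auto
    have "hb_ok w (\<Union>C)"
      unfolding hb_ok_def
    proof (intro conjI allI impI)
      show "(0,0) \<in> \<Union>C" using False sub unfolding hb_ok_def by blast
      show "(w, norm w) \<in> \<Union>C" using False sub unfolding hb_ok_def by blast
    next
      fix x a y b assume "(x,a) \<in> \<Union>C" "(y,b) \<in> \<Union>C"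
      then obtain X Y where XY: "X \<in> C" "Y \<in> C" "(x,a) \<in> X" "(y,b) \<in> Y" by blast
      show "(x+y, a+b) \<in> \<Union>C"
      proof (cases "X \<subseteq> Y")
        case True
        have "hb_ok w Y" using XY sub by blast
        then have "(x+y, a+b) \<in> Y" using True XY unfolding hb_ok_def by blast
        then show ?thesis using XY by blast
      next
        case False
        then have YX: "Y \<subseteq> X" using ch XY by blast
        have "hb_ok w X" using XY sub by blast
        then have "(x+y, a+b) \<in> X" using YX XY unfolding hb_ok_def by blast
        then show ?thesis using XY by blast
      qed
    next
      fix x a r assume "(x,a) \<in> \<Union>C"
      then show "(r *\<^sub>R x, r*a) \<in> \<Union>C" using sub unfolding hb_ok_def by blast
    next
      fix a assume "(0,a) \<in> \<Union>C"
      then show "a = 0" using sub unfolding hb_ok_def by blast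
    next
      fix x a assume "(x,a) \<in> \<Union>C"
      then show "a \<le> norm x" using sub unfolding hb_ok_def by blast
    qed
    then show ?thesis by blast
  qed
qed

lemma hb_func:
  assumes "hb_ok w G" "(x,a) \<in> G" "(x,b) \<in> G"
  shows "a = b"
proof -
  have "(-1 *\<^sub>R x, -1 * b) \<in> G" using assms unfolding hb_ok_def by blast
  then have "(x + -1 *\<^sub>R x, a + -1 * b) \<in> G" using assms unfolding hb_ok_def by blast
  then have "(0, a - b) \<in> G" by simp
  then show ?thesis using assms unfolding hb_ok_def by auto
qed

lemma hb_extend:
  assumes ok: "hb_ok w M" and v: "\<not> (\<exists>a. (v,a) \<in> M)"
  shows "\<exists>M'. hb_ok w M' \<and> M \<subseteq> M' \<and> M' \<noteq> M"
proof -
  from ok have M0: "(0,0) \<in> M"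
    and Madd: "\<And>x a y b. (x,a) \<in> M \<Longrightarrow> (y,b) \<in> M \<Longrightarrow> (x+y, a+b) \<in> M"
    and Msc: "\<And>x a r. (x,a) \<in> M \<Longrightarrow> (r *\<^sub>R x, r*a) \<in> M"
    and Mf: "\<And>a. (0,a) \<in> M \<Longrightarrow> a = 0"
    and Md: "\<And>x a. (x,a) \<in> M \<Longrightarrow> a \<le> norm x"
    and Mw: "(w, norm w) \<in> M"
    unfolding hb_ok_def by blast+
  define S where "S = {a - norm (x - v) | x a. (x,a) \<in> M}"
  define c where "c = Sup S"
  have KI: "a - norm (x - v) \<le> norm (z + v) - b" if "(x,a) \<in> M" "(z,b) \<in> M" for x a z b
  proof -
    have "a + b \<le> norm (x + z)" using Md[OF Madd[OF that]] .
    also have "x + z = (x - v) + (z + v)" by simp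
    also have "norm \<dots> \<le> norm (x - v) + norm (z + v)" by (rule norm_triangle_ineq)
    finally show ?thesis by simp
  qed
  have Sne: "S \<noteq> {}" using M0 unfolding S_def by blast
  have Sbdd: "bdd_above S" unfolding S_def bdd_above_def
    using KI[OF _ M0] by auto
  have c_up: "a - norm (x - v) \<le> c" if "(x,a) \<in> M" for x a
    unfolding c_def by (rule cSup_upper[OF _ Sbdd]) (use that S_def in blast)
  have c_lo: "c \<le> norm (z + v) - b" if "(z,b) \<in> M" for z b
    unfolding c_def by (rule cSup_least[OF Sne]) (use KI that S_def in blast)
  define M' where "M' = {(x + t *\<^sub>R v, a + t * c) | x a t. (x,a) \<in> M}"
  have dom: "a + t * c \<le> norm (x + t *\<^sub>R v)" if xa: "(x,a) \<in> M" for x a t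
  proof (cases "t = 0")
    case True then show ?thesis using Md[OF xa] by simp
  next
    case False
    show ?thesis
    proof (cases "t > 0")
      case True
      have "c \<le> norm ((1/t) *\<^sub>R x + v) - (1/t) * a" using c_lo[OF Msc[OF xa]] .
      then have "t * c \<le> t * norm ((1/t) *\<^sub>R x + v) - a"
        using True by (simp add: field_simps)
      also have "t * norm ((1/t) *\<^sub>R x + v) = norm (t *\<^sub>R ((1/t) *\<^sub>R x + v))"
        using True by simp
      also have "t *\<^sub>R ((1/t) *\<^sub>R x + v) = x + t *\<^sub>R v"
        using True by (simp add: scaleR_add_right)
      finally show ?thesis by simp
    next
      case False2: False
      define s where "s = - t"
      have sp: "s > 0" using False False2 s_def by simp
      have "(1/s) * a - norm ((1/s) *\<^sub>R x - v) \<le> c" using c_up[OF Msc[OF xa]] .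
      then have "a - s * c \<le> s * norm ((1/s) *\<^sub>R x - v)"
        using sp by (simp add: field_simps)
      also have "s * norm ((1/s) *\<^sub>R x - v) = norm (s *\<^sub>R ((1/s) *\<^sub>R x - v))"
        using sp by simp
      also have "s *\<^sub>R ((1/s) *\<^sub>R x - v) = x + t *\<^sub>R v"
        using sp s_def by (simp add: scaleR_diff_right)
      finally show ?thesis using s_def by simp
    qed
  qed
  have "hb_ok w M'" unfolding hb_ok_def
  proof (intro conjI allI impI)
    show "(0,0) \<in> M'" unfolding M'_def using M0 by force
    show "(w, norm w) \<in> M'" unfolding M'_def using Mw by force
  next
    fix x a y b assume "(x,a) \<in> M'" "(y,b) \<in> M'"
    then obtain x1 a1 t1 x2 a2 t2 where h: "(x1,a1) \<in> M" "(x2,a2) \<in> M"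
      "x = x1 + t1 *\<^sub>R v" "a = a1 + t1 * c" "y = x2 + t2 *\<^sub>R v" "b = a2 + t2 * c"
      unfolding M'_def by blast
    have "x + y = (x1 + x2) + (t1 + t2) *\<^sub>R v" "a + b = (a1 + a2) + (t1 + t2) * c"
      using h by (simp_all add: algebra_simps)
    then show "(x+y, a+b) \<in> M'" unfolding M'_def using Madd[OF h(1,2)] by blast
  next
    fix x a r assume "(x,a) \<in> M'"
    then obtain x1 a1 t1 where h: "(x1,a1) \<in> M" "x = x1 + t1 *\<^sub>R v" "a = a1 + t1 * c"
      unfolding M'_def by blast
    have "r *\<^sub>R x = r *\<^sub>R x1 + (r*t1) *\<^sub>R v" "r * a = r * a1 + (r * t1) * c"
      using h by (simp_all add: algebra_simps)
    then show "(r *\<^sub>R x, r*a) \<in> M'" unfolding M'_def using Msc[OF h(1)] by blast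
  next
    fix a assume "(0,a) \<in> M'"
    then obtain x1 a1 t1 where h: "(x1,a1) \<in> M" "0 = x1 + t1 *\<^sub>R v" "a = a1 + t1 * c"
      unfolding M'_def by blast
    show "a = 0"
    proof (cases "t1 = 0")
      case True
      then show ?thesis using h Mf by simp
    next
      case False
      have "(-(1/t1)) *\<^sub>R x1 = v"
      proof -
        have "x1 = - (t1 *\<^sub>R v)" using h(2) by (simp add: eq_neg_iff_add_eq_0)
        then show ?thesis using False by simp
      qed
      then have "(v, (-(1/t1)) * a1) \<in> M" using Msc[OF h(1)] by metis
      then show ?thesis using v by blast
    qed
  next
    fix x a assume "(x,a) \<in> M'"
    then show "a \<le> norm x" unfolding M'_def using dom by blast
  qed
  moreover have "M \<subseteq> M'"
  proof
    fix p assume "p \<in> M"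
    then obtain x a where "p = (x,a)" "(x,a) \<in> M" by (cases p) auto
    then show "p \<in> M'" unfolding M'_def by force
  qed
  moreover have "(v, c) \<in> M'"
  proof -
    have "(v, c) = (0 + 1 *\<^sub>R v, 0 + 1 * c)" by simp
    then show ?thesis unfolding M'_def using M0 by blast
  qed
  ultimately show ?thesis using v by blast
qed

lemma real_hahn_banach:
  fixes w :: "'a::real_normed_vector"
  assumes "w \<noteq> 0"
  shows "\<exists>f. (\<forall>x y. f (x + y) = f x + f y) \<and> (\<forall>r x. f (r *\<^sub>R x) = r * f x)
           \<and> (\<forall>x. \<bar>f x\<bar> \<le> norm x) \<and> f w = norm w"
proof -
  obtain M where ok: "hb_ok w M" and max: "\<And>X. hb_ok w X \<Longrightarrow> M \<subseteq> X \<Longrightarrow> X = M"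
    using hb_chain[OF assms] by blast
  have tot: "\<exists>a. (x,a) \<in> M" for x
    using hb_extend[OF ok, of x] max by blast
  define f where "f x = (THE a. (x,a) \<in> M)" for x
  have fM: "(x, f x) \<in> M" for x
    unfolding f_def using tot[of x] hb_func[OF ok] by (metis theI)
  have feq: "(x,a) \<in> M \<Longrightarrow> f x = a" for x a using hb_func[OF ok fM] by blast
  have Madd: "\<And>x a y b. (x,a) \<in> M \<Longrightarrow> (y,b) \<in> M \<Longrightarrow> (x+y, a+b) \<in> M"
    and Msc: "\<And>x a r. (x,a) \<in> M \<Longrightarrow> (r *\<^sub>R x, r*a) \<in> M"
    using ok unfolding hb_ok_def by blast+
  have add: "f (x + y) = f x + f y" for x y
    by (rule feq, rule Madd, rule fM, rule fM)
  have sc: "f (r *\<^sub>R x) = r * f x" for r x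
    by (rule feq, rule Msc, rule fM)
  have le: "f x \<le> norm x" for x using ok fM unfolding hb_ok_def by blast
  have "\<bar>f x\<bar> \<le> norm x" for x
  proof -
    have "f ((-1) *\<^sub>R x) \<le> norm ((-1) *\<^sub>R x)" by (rule le)
    then have "- f x \<le> norm x" by (simp only: sc norm_scaleR)
    then show ?thesis using le[of x] by linarith
  qed
  moreover have "f w = norm w" using ok feq unfolding hb_ok_def by blast
  ultimately show ?thesis using add sc by blast
qed



lemma scaleC_zero_right[simp]: "scaleC a (0::'a::complex_banach) = 0"
proof -
  have "scaleC a (0::'a) = scaleC a 0 + scaleC a 0" by (metis add_0 scaleC_add_right)
  then show ?thesis by simp
qed

lemma scaleC_minus_right: "scaleC a (- (x::'a::complex_banach)) = - scaleC a x"
  by (metis add.right_inverse add_eq_0_iff scaleC_add_right scaleC_zero_right)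

lemma scaleC_diff_right: "scaleC a ((x::'a::complex_banach) - y) = scaleC a x - scaleC a y"
  by (metis diff_conv_add_uminus scaleC_add_right scaleC_minus_right)

lemma scaleC_zero_left[simp]: "scaleC 0 (x::'a::complex_banach) = 0"
  by (metis of_real_0 scaleC_of_real scaleR_zero_left)

lemma scaleC_one[simp]: "scaleC 1 (x::'a::complex_banach) = x"
  by (metis of_real_1 scaleC_of_real scaleR_one)

lemma scaleC_minus_left: "scaleC (- a) (x::'a::complex_banach) = - scaleC a x"
  by (metis add.right_inverse add_eq_0_iff scaleC_add_left scaleC_zero_left)

lemma scaleC_diff_left: "scaleC (a - b) (x::'a::complex_banach) = scaleC a x - scaleC b x"
  by (metis diff_conv_add_uminus scaleC_add_left scaleC_minus_left)

lemma scaleC_eq_0_iff: "scaleC a (x::'a::complex_banach) = 0 \<longleftrightarrow> a = 0 \<or> x = 0"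
  by (metis mult_eq_0_iff norm_eq_zero norm_scaleC scaleC_zero_left scaleC_zero_right)

lemma scaleC_scaleR: "scaleC a (scaleR r (x::'a::complex_banach)) = scaleR r (scaleC a x)"
  by (metis mult.commute scaleC_of_real scaleC_scaleC)

lemma scaleC_sum_right: "scaleC a (sum f S) = (\<Sum>i\<in>S. scaleC a (f i::'a::complex_banach))"
  by (induction S rule: infinite_finite_induct) (simp_all add: scaleC_add_right)

lemma scaleC_complex: "scaleC (Complex a b) (x::'a::complex_banach) = a *\<^sub>R x + b *\<^sub>R scaleC \<i> x"
proof -
  have "Complex a b = complex_of_real a + \<i> * complex_of_real b" by (simp add: complex_eq_iff)
  then show ?thesis
    by (simp add: scaleC_add_left scaleC_of_real flip: scaleC_scaleC) (simp add: scaleC_scaleR)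
qed

definition bfun :: "('a::complex_banach \<Rightarrow> complex) \<Rightarrow> bool" where
  "bfun g \<longleftrightarrow> (\<forall>x y. g (x + y) = g x + g y) \<and> (\<forall>c x. g (scaleC c x) = c * g x)
      \<and> (\<exists>K. \<forall>x. cmod (g x) \<le> K * norm x)"

lemma complex_hahn_banach:
  fixes w :: "'a::complex_banach"
  assumes "w \<noteq> 0"
  shows "\<exists>g. bfun g \<and> g w = 1"
proof -
  obtain f where fadd: "\<And>x y. f (x + y) = f x + f y" and fsc: "\<And>r x. f (r *\<^sub>R x) = r * f x"
    and fb: "\<And>x. \<bar>f x\<bar> \<le> norm x" and fw: "f w = norm w"
    using real_hahn_banach[OF assms] by blast
  define h where "h x = Complex (f x) (- f (scaleC \<i> x))" for x
  have ii: "scaleC \<i> (scaleC \<i> x) = - (x::'a)" for x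
    by (simp add: scaleC_scaleC scaleC_minus_left)
  have fneg: "f (- x) = - f x" for x using fsc[of "-1" x] by simp
  have hadd: "h (x + y) = h x + h y" for x y
    by (simp add: h_def fadd scaleC_add_right complex_eq_iff)
  have hsR: "h (r *\<^sub>R x) = complex_of_real r * h x" for r x
    by (simp add: h_def fsc scaleC_scaleR complex_eq_iff)
  have hi: "h (scaleC \<i> x) = \<i> * h x" for x
    by (simp add: h_def ii fneg complex_eq_iff)
  have hsc: "h (scaleC c x) = c * h x" for c x
  proof -
    obtain a b where c: "c = Complex a b" by (cases c)
    have "h (scaleC c x) = complex_of_real a * h x + complex_of_real b * (\<i> * h x)"
      by (simp add: c scaleC_complex hadd hsR hi)
    also have "\<dots> = c * h x" by (simp add: c complex_eq_iff)
    finally show ?thesis .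
  qed
  have hb: "cmod (h x) \<le> 2 * norm x" for x
  proof -
    have "cmod (h x) \<le> \<bar>f x\<bar> + \<bar>f (scaleC \<i> x)\<bar>"
      unfolding h_def using cmod_le[of "Complex (f x) (- f (scaleC \<i> x))"] by simp
    also have "\<dots> \<le> norm x + norm (scaleC \<i> x)" using fb by (intro add_mono) auto
    also have "norm (scaleC \<i> x) = norm x" by (simp add: norm_scaleC)
    finally show ?thesis by simp
  qed
  have hw: "h w \<noteq> 0" using assms fw by (simp add: h_def complex_eq_iff)
  define g where "g x = h x / h w" for x
  have "bfun g" unfolding bfun_def g_def
  proof (intro conjI allI exI)
    fix x y show "h (x + y) / h w = h x / h w + h y / h w" by (simp add: hadd add_divide_distrib)
  next
    fix c x show "h (scaleC c x) / h w = c * (h x / h w)" by (simp add: hsc)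
  next
    fix x show "cmod (h x / h w) \<le> (2 / cmod (h w)) * norm x"
      using hb[of x] hw by (simp add: norm_divide divide_right_mono)
  qed
  moreover have "g w = 1" using hw by (simp add: g_def)
  ultimately show ?thesis by blast
qed



definition lc2 :: "complex \<Rightarrow> complex \<Rightarrow> 'a::complex_banach \<Rightarrow> 'a \<Rightarrow> 'a" where
  "lc2 a b u v = scaleC a u + scaleC b v"

definition lc3 :: "complex \<Rightarrow> complex \<Rightarrow> complex \<Rightarrow> 'a::complex_banach \<Rightarrow> 'a \<Rightarrow> 'a \<Rightarrow> 'a" where
  "lc3 a b c u v w = scaleC a u + scaleC b v + scaleC c w"

lemma clinear_0: "clinear f \<Longrightarrow> f 0 = 0"
  unfolding clinear_def by (metis add_cancel_right_right add_0)

lemma clinear_minus: "clinear f \<Longrightarrow> f (- x) = - f x"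
  unfolding clinear_def by (metis add.right_inverse add_eq_0_iff clinear_0 clinear_def)

lemma clinear_diff: "clinear f \<Longrightarrow> f (x - y) = f x - f y"
proof -
  assume f: "clinear f"
  have "f (x - y) = f (x + - y)" by simp
  also have "\<dots> = f x + - f y" using f clinear_minus unfolding clinear_def by metis
  finally show ?thesis by simp
qed

lemma clinear_add: "clinear f \<Longrightarrow> f (x + y) = f x + f y"
  unfolding clinear_def by blast

lemma clinear_scaleC: "clinear f \<Longrightarrow> f (scaleC c x) = scaleC c (f x)"
  unfolding clinear_def by blast

lemma clinear_lc2: "clinear f \<Longrightarrow> f (lc2 a b u v) = lc2 a b (f u) (f v)"
  by (simp add: lc2_def clinear_add clinear_scaleC)

lemma clinear_lc3: "clinear f \<Longrightarrow> f (lc3 a b c u v w) = lc3 a b c (f u) (f v) (f w)"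
  by (simp add: lc3_def clinear_add clinear_scaleC)

lemma lc3_shift:
  assumes "T u = v" "T v = w" "T w = scaleC m v" "clinear T"
  shows "T (lc3 a b c u v w) = lc3 0 (a + c*m) b u v w"
proof -
  have "T (lc3 a b c u v w) = lc3 a b c v w (scaleC m v)"
    using clinear_lc3[OF assms(4)] assms(1-3) by simp
  also have "\<dots> = lc3 0 (a + c*m) b u v w"
    unfolding lc3_def by (simp add: scaleC_add_left scaleC_scaleC add_ac)
  finally show ?thesis .
qed

lemma lc3_lc3:
  "lc3 a b c (lc3 p1 q1 r1 u v w) (lc3 p2 q2 r2 u v w) (lc3 p3 q3 r3 u v w)
   = lc3 (a*p1 + b*p2 + c*p3) (a*q1 + b*q2 + c*q3) (a*r1 + b*r2 + c*r3) u v w"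
  unfolding lc3_def by (simp add: scaleC_add_right scaleC_scaleC scaleC_add_left add_ac)

lemma lc2_lc2:
  "lc2 a b (lc2 p1 q1 u v) (lc2 p2 q2 u v) = lc2 (a*p1 + b*p2) (a*q1 + b*q2) u v"
  unfolding lc2_def by (simp add: scaleC_add_right scaleC_scaleC scaleC_add_left add_ac)

lemma lc3_sub:
  "lc3 a b c u v w - scaleC z (lc3 a' b' c' u v w) = lc3 (a - z*a') (b - z*b') (c - z*c') u v w"
  by (simp add: lc3_def scaleC_add_right scaleC_diff_left scaleC_scaleC algebra_simps)

lemma lc3_100: "lc3 1 0 0 u v w = u" by (simp add: lc3_def)

lemma lc2_shift:
  assumes "T u = v" "T v = scaleC m v" "clinear T"
  shows "T (lc2 a b u v) = lc2 0 (a + b*m) u v"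
proof -
  have "T (lc2 a b u v) = lc2 a b v (scaleC m v)"
    using clinear_lc2[OF assms(3)] assms(1-2) by simp
  also have "\<dots> = lc2 0 (a + b*m) u v"
    unfolding lc2_def by (simp add: scaleC_add_left scaleC_scaleC)
  finally show ?thesis .
qed

lemma lc2_sub:
  "lc2 a b u v - scaleC z (lc2 a' b' u v) = lc2 (a - z*a') (b - z*b') u v"
  by (simp add: lc2_def scaleC_add_right scaleC_diff_left scaleC_scaleC algebra_simps)

lemma lc2_10: "lc2 1 0 u v = u" by (simp add: lc2_def)

lemma lc2_add: "lc2 a b u v + lc2 c d u v = lc2 (a+c) (b+d) u v"
  by (simp add: lc2_def scaleC_add_left algebra_simps)

lemma lc2_scale: "scaleC k (lc2 a b u v) = lc2 (k*a) (k*b) u v"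
  by (simp add: lc2_def scaleC_add_right scaleC_scaleC)

lemma bnd_nonneg:
  assumes "\<exists>K. \<forall>x. norm (f x) \<le> norm x * K"
  shows "\<exists>K\<ge>0. \<forall>x. norm (f x) \<le> norm x * K"
proof -
  obtain K where K: "\<forall>x. norm (f x) \<le> norm x * K" using assms by blast
  have "norm (f x) \<le> norm x * max K 0" for x
    using K[rule_format, of x] by (smt (verit) mult_left_mono norm_ge_zero)
  then show ?thesis by (intro exI[of _ "max K 0"]) auto
qed

lemma bcl_clinear: "bounded_clinear f \<Longrightarrow> clinear f"
  unfolding bounded_clinear_def by blast

lemma bcl_id: "bounded_clinear (\<lambda>x::'a::complex_banach. x)"
  unfolding bounded_clinear_def clinear_def by (auto intro: exI[of _ 1])

lemma bcl_comp:
  assumes "bounded_clinear f" "bounded_clinear g"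
  shows "bounded_clinear (\<lambda>x. f (g x))"
proof -
  obtain K1 where K1: "K1 \<ge> 0" "\<forall>x. norm (f x) \<le> norm x * K1"
    using assms(1) bnd_nonneg unfolding bounded_clinear_def by metis
  obtain K2 where K2: "K2 \<ge> 0" "\<forall>x. norm (g x) \<le> norm x * K2"
    using assms(2) bnd_nonneg unfolding bounded_clinear_def by metis
  have "norm (f (g x)) \<le> norm x * (K2 * K1)" for x
  proof -
    have "norm (f (g x)) \<le> norm (g x) * K1" using K1 by blast
    also have "\<dots> \<le> (norm x * K2) * K1" using K1 K2 by (simp add: mult_right_mono)
    finally show ?thesis by (simp add: mult.assoc)
  qed
  moreover have "clinear (\<lambda>x. f (g x))" using assms unfolding bounded_clinear_def clinear_def by auto
  ultimately show ?thesis unfolding bounded_clinear_def by blast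
qed

lemma bcl_comp': "bounded_clinear f \<Longrightarrow> bounded_clinear g \<Longrightarrow> bounded_clinear (f \<circ> g)"
  using bcl_comp[of f g] by (simp add: comp_def)

lemma bcl_add:
  assumes "bounded_clinear f" "bounded_clinear g"
  shows "bounded_clinear (\<lambda>x. f x + g x)"
proof -
  obtain K1 where K1: "\<forall>x. norm (f x) \<le> norm x * K1"
    using assms(1) unfolding bounded_clinear_def by metis
  obtain K2 where K2: "\<forall>x. norm (g x) \<le> norm x * K2"
    using assms(2) unfolding bounded_clinear_def by metis
  have "norm (f x + g x) \<le> norm x * (K1 + K2)" for x
    using norm_triangle_ineq[of "f x" "g x"] K1 K2 by (smt (verit) distrib_left)
  moreover have "clinear (\<lambda>x. f x + g x)" using assms unfolding bounded_clinear_def clinear_def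
    by (auto simp: scaleC_add_right algebra_simps)
  ultimately show ?thesis unfolding bounded_clinear_def by blast
qed

lemma bcl_scale:
  assumes "bounded_clinear f"
  shows "bounded_clinear (\<lambda>x. scaleC c (f x))"
proof -
  obtain K1 where K1: "\<forall>x. norm (f x) \<le> norm x * K1"
    using assms(1) unfolding bounded_clinear_def by metis
  have "norm (scaleC c (f x)) \<le> norm x * (cmod c * K1)" for x
  proof -
    have "cmod c * norm (f x) \<le> cmod c * (norm x * K1)" using K1 by (simp add: mult_left_mono)
    then show ?thesis by (simp add: norm_scaleC mult.left_commute)
  qed
  moreover have "clinear (\<lambda>x. scaleC c (f x))" using assms unfolding bounded_clinear_def clinear_def
    by (auto simp: scaleC_add_right scaleC_scaleC mult.commute)
  ultimately show ?thesis unfolding bounded_clinear_def by blast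
qed

lemma bcl_funpow:
  fixes f :: "'a::complex_banach \<Rightarrow> 'a"
  shows "bounded_clinear f \<Longrightarrow> bounded_clinear (f ^^ n)"
proof (induction n)
  case 0
  have "f ^^ 0 = (\<lambda>x. x)" by (simp add: id_def)
  then show ?case using bcl_id by metis
next
  case (Suc n) then show ?case using bcl_comp[of f "f ^^ n"] by (simp add: comp_def)
qed

lemma bcl_rank1:
  assumes "bfun g"
  shows "bounded_clinear (\<lambda>x. scaleC (g x) e)"
proof -
  obtain K where K: "\<forall>x. cmod (g x) \<le> K * norm x" using assms unfolding bfun_def by blast
  have "norm (scaleC (g x) e) \<le> norm x * (K * norm e)" for x
  proof -
    have "cmod (g x) * norm e \<le> (K * norm x) * norm e" using K by (simp add: mult_right_mono)
    then show ?thesis by (simp add: norm_scaleC mult_ac)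
  qed
  moreover have "clinear (\<lambda>x. scaleC (g x) e)" using assms unfolding bfun_def clinear_def
    by (auto simp: scaleC_add_left scaleC_scaleC)
  ultimately show ?thesis unfolding bounded_clinear_def by blast
qed

lemma not_in_spectrum:
  assumes "bounded_clinear S" "\<And>y. S (T y - scaleC z y) = y" "\<And>y. T (S y) - scaleC z (S y) = y"
  shows "z \<notin> op_spectrum T"
proof -
  have "S \<circ> (\<lambda>x. T x - scaleC z x) = id" "(\<lambda>x. T x - scaleC z x) \<circ> S = id"
    using assms by (auto simp: fun_eq_iff)
  then show ?thesis using assms(1) unfolding op_spectrum_def invertible_op_def by blast
qed

lemma eig_in_spectrum:
  assumes "v \<noteq> 0" "T v = scaleC z v" "clinear T"
  shows "z \<in> op_spectrum T"
proof -
  have "\<not> invertible_op (\<lambda>x. T x - scaleC z x)"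
  proof
    assume "invertible_op (\<lambda>x. T x - scaleC z x)"
    then obtain S where "S \<circ> (\<lambda>x. T x - scaleC z x) = id" unfolding invertible_op_def by blast
    then have "S (T v - scaleC z v) = v" by (metis comp_apply id_apply)
    moreover have "S (T 0 - scaleC z 0) = 0"
      using \<open>S \<circ> _ = id\<close> by (metis comp_apply id_apply)
    ultimately have "v = 0" using assms(2) clinear_0[OF assms(3)] by simp
    then show False using assms(1) by simp
  qed
  then show ?thesis unfolding op_spectrum_def by blast
qed

lemma zero_in_spectrum:
  assumes "range T \<noteq> UNIV"
  shows "0 \<in> op_spectrum T"
proof -
  have "\<not> invertible_op (\<lambda>x. T x - scaleC 0 x)"
  proof
    assume "invertible_op (\<lambda>x. T x - scaleC 0 x)"
    then obtain S where "(\<lambda>x. T x - scaleC 0 x) \<circ> S = id" unfolding invertible_op_def by blast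
    then have "T (S y) = y" for y by (metis comp_apply id_apply scaleC_zero_left diff_zero)
    then have "range T = UNIV" by (metis surj_def)
    then show False using assms by simp
  qed
  then show ?thesis unfolding op_spectrum_def by blast
qed

lemma spectral_radius_eq:
  assumes "\<forall>z\<in>op_spectrum T. cmod z \<le> r" "z0 \<in> op_spectrum T" "cmod z0 = r"
  shows "spectral_radius T = r"
  unfolding spectral_radius_def using assms by (intro cSup_eq_maximum) auto

lemma periph_rank1:
  assumes T: "bounded_clinear T" and R: "range T \<noteq> UNIV"
    and sq: "\<And>y. T (T y) = scaleC l (T y)"
  shows "\<exists>z. peripheral_spectrum T = {z}"
proof -
  have lin: "clinear T" using T bcl_clinear by blast
  have sub: "op_spectrum T \<subseteq> {0, l}"
  proof
    fix z assume zs: "z \<in> op_spectrum T"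
    show "z \<in> {0, l}"
    proof (rule ccontr)
      assume "z \<notin> {0, l}"
      then have z0: "z \<noteq> 0" and zl: "z - l \<noteq> 0" by auto
      define a where "a = - 1 / z"
      define b where "b = - 1 / (z * (z - l))"
      define S where "S y = lc2 a b y (T y)" for y
      have bS: "bounded_clinear S" unfolding S_def lc2_def
        by (intro bcl_add bcl_scale bcl_id T)
      have TS: "T (lc2 c d y (T y)) = lc2 0 (c + d * l) y (T y)" for c d y
        by (rule lc2_shift) (simp_all add: sq lin)
      have "T (S y) - scaleC z (S y) = y" for y
      proof -
        have "T (S y) - scaleC z (S y) = lc2 (0 - z * a) (a + b * l - z * b) y (T y)"
          unfolding S_def TS lc2_sub ..
        also have "0 - z * a = 1" using z0 by (simp add: a_def)
        also have "a + b * l - z * b = 0" using z0 zl by (simp add: a_def b_def field_simps)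
        finally show ?thesis by (simp add: lc2_10)
      qed
      moreover have "S (T y - scaleC z y) = y" for y
      proof -
        have "T y - scaleC z y = lc2 (- z) 1 y (T y)" by (simp add: lc2_def scaleC_minus_left)
        then have "S (T y - scaleC z y) = lc2 a b (lc2 (- z) 1 y (T y)) (lc2 0 (-z + l) y (T y))"
          unfolding S_def using TS[of "-z" 1 y] by simp
        also have "\<dots> = lc2 (a * (-z) + b * 0) (a * 1 + b * (-z + l)) y (T y)"
          by (rule lc2_lc2)
        also have "a * (-z) + b * 0 = 1" using z0 by (simp add: a_def)
        also have "a * 1 + b * (-z + l) = 0" using z0 zl by (simp add: a_def b_def field_simps)
        finally show ?thesis by (simp add: lc2_10)
      qed
      ultimately have "z \<notin> op_spectrum T" using not_in_spectrum[OF bS] by blast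
      then show False using zs by blast
    qed
  qed
  have z0: "0 \<in> op_spectrum T" using zero_in_spectrum[OF R] .
  show ?thesis
  proof (cases "l \<in> op_spectrum T")
    case True
    then have S: "op_spectrum T = {0, l}" using sub z0 by blast
    have sr: "spectral_radius T = cmod l"
      by (rule spectral_radius_eq[OF _ True]) (auto simp: S)
    have "peripheral_spectrum T = {z \<in> {0,l}. cmod z = cmod l}"
      unfolding peripheral_spectrum_def S sr ..
    also have "\<dots> = {l}" by (cases "l = 0") auto
    finally have "peripheral_spectrum T = {l}" .
    then show ?thesis by blast
  next
    case False
    then have S: "op_spectrum T = {0}" using sub z0 by blast
    have "spectral_radius T = 0"
      by (rule spectral_radius_eq[OF _ z0]) (auto simp: S)
    then have "peripheral_spectrum T = {0}"
      unfolding peripheral_spectrum_def S by auto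
    then show ?thesis by blast
  qed
qed



lemma periph_two:
  assumes T: "bounded_clinear T" and m0: "m \<noteq> 0"
    and cube: "\<And>x. T (T (T x)) = scaleC (m*m) (T x)"
    and v: "v \<noteq> 0" "T v = scaleC m v" and w: "w \<noteq> 0" "T w = scaleC (-m) w"
  shows "\<not> (\<exists>z. peripheral_spectrum T = {z})"
proof -
  have lin: "clinear T" using T bcl_clinear by blast
  have sub: "op_spectrum T \<subseteq> {0, m, -m}"
  proof
    fix z assume zs: "z \<in> op_spectrum T"
    show "z \<in> {0, m, -m}"
    proof (rule ccontr)
      assume "z \<notin> {0, m, -m}"
      then have z0: "z \<noteq> 0" and zm: "m*m - z*z \<noteq> 0"
        by (auto simp: mult.commute square_eq_iff [symmetric] power2_eq_square)
      define a where "a = - 1 / z"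
      define c where "c = 1 / (z * (m*m - z*z))"
      define b where "b = z * c"
      define S where "S y = lc3 a b c y (T y) (T (T y))" for y
      have bTT: "bounded_clinear (\<lambda>y. T (T y))" by (rule bcl_comp[OF T T])
      have bS: "bounded_clinear S" unfolding S_def lc3_def
        by (intro bcl_add bcl_scale bcl_id T bTT)
      have TS: "T (lc3 p q r y (T y) (T (T y))) = lc3 0 (p + r*(m*m)) q y (T y) (T (T y))" for p q r y
        by (rule lc3_shift) (simp_all add: cube lin)
      have "T (S y) - scaleC z (S y) = y" for y
      proof -
        have "T (S y) - scaleC z (S y) = lc3 (0 - z * a) (a + c*(m*m) - z * b) (b - z*c) y (T y) (T (T y))"
          unfolding S_def TS lc3_sub ..
        also have "0 - z * a = 1" using z0 by (simp add: a_def)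
        also have "a + c*(m*m) - z * b = 0" using z0 zm by (simp add: a_def b_def c_def field_simps)
        also have "b - z*c = 0" by (simp add: b_def)
        finally show ?thesis by (simp add: lc3_100)
      qed
      moreover have "S (T y - scaleC z y) = y" for y
      proof -
        have e1: "T y - scaleC z y = lc3 (- z) 1 0 y (T y) (T (T y))"
          by (simp add: lc3_def scaleC_minus_left)
        have e2: "T (lc3 (- z) 1 0 y (T y) (T (T y))) = lc3 0 (-z) 1 y (T y) (T (T y))"
          using TS[of "-z" 1 0 y] by simp
        have e3: "T (lc3 0 (-z) 1 y (T y) (T (T y))) = lc3 0 (m*m) (-z) y (T y) (T (T y))"
          using TS[of 0 "-z" 1 y] by simp
        have "S (T y - scaleC z y) = lc3 a b c (lc3 (- z) 1 0 y (T y) (T (T y)))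
               (lc3 0 (-z) 1 y (T y) (T (T y))) (lc3 0 (m*m) (-z) y (T y) (T (T y)))"
          unfolding S_def e1 e2 e3 ..
        also have "\<dots> = lc3 (a*(-z) + b*0 + c*0) (a*1 + b*(-z) + c*(m*m)) (a*0 + b*1 + c*(-z)) y (T y) (T (T y))"
          by (rule lc3_lc3)
        also have "a*(-z) + b*0 + c*0 = 1" using z0 by (simp add: a_def)
        also have "a*1 + b*(-z) + c*(m*m) = 0" using z0 zm by (simp add: a_def b_def c_def field_simps)
        also have "a*0 + b*1 + c*(-z) = 0" by (simp add: b_def)
        finally show ?thesis by (simp add: lc3_100)
      qed
      ultimately have "z \<notin> op_spectrum T" using not_in_spectrum[OF bS] by blast
      then show False using zs by blast
    qed
  qed
  have mS: "m \<in> op_spectrum T" by (rule eig_in_spectrum[OF v lin])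
  have nmS: "-m \<in> op_spectrum T" by (rule eig_in_spectrum[OF w lin])
  have sr: "spectral_radius T = cmod m"
    by (rule spectral_radius_eq[OF _ mS]) (use sub in auto)
  have "m \<in> peripheral_spectrum T" "-m \<in> peripheral_spectrum T"
    unfolding peripheral_spectrum_def sr using mS nmS by auto
  moreover have "m \<noteq> -m" using m0 by simp
  ultimately show ?thesis by auto
qed

lemma periph_2d:
  assumes T: "bounded_clinear T"
    and ind: "\<And>a b. lc2 a b h1 h2 = 0 \<Longrightarrow> a = 0 \<and> b = 0"
    and sp: "\<And>x. \<exists>c d. T x = lc2 c d h1 h2"
    and T1: "T h1 = lc2 n11 n21 h1 h2" and T2: "T h2 = lc2 n12 n22 h1 h2"
    and tr: "n11 + n22 = 0" and dt: "n11*n22 - n12*n21 \<noteq> 0"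
  shows "\<not> (\<exists>z. peripheral_spectrum T = {z})"
proof -
  have lin: "clinear T" using T bcl_clinear by blast
  define m where "m = csqrt (n11*n11 + n12*n21)"
  have mm: "m*m = n11*n11 + n12*n21" unfolding m_def by (metis power2_csqrt power2_eq_square)
  have n22: "n22 = - n11" using tr by (simp add: eq_neg_iff_add_eq_0 add.commute)
  have "n11*n22 - n12*n21 = -(m*m)" using mm n22 by (simp add: algebra_simps)
  then have m0: "m \<noteq> 0" using dt by auto
  have TL: "T (lc2 c d h1 h2) = lc2 (c*n11 + d*n12) (c*n21 + d*n22) h1 h2" for c d
    unfolding clinear_lc2[OF lin] T1 T2 lc2_lc2 ..
  have TT: "T (T (lc2 c d h1 h2)) = scaleC (m*m) (lc2 c d h1 h2)" for c d
  proof -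
    have "T (T (lc2 c d h1 h2)) = lc2 ((c*n11 + d*n12)*n11 + (c*n21 + d*n22)*n12)
            ((c*n11 + d*n12)*n21 + (c*n21 + d*n22)*n22) h1 h2" unfolding TL ..
    also have "\<dots> = lc2 (m*m*c) (m*m*d) h1 h2"
      using mm n22 by (simp add: algebra_simps)
    finally show ?thesis by (simp add: lc2_scale)
  qed
  have cube: "T (T (T x)) = scaleC (m*m) (T x)" for x
    using sp[of x] TT by auto
  have ev: "T (T y + scaleC k y) = scaleC k (T y + scaleC k y)"
    if "T (T y) = scaleC (k*k) y" for y k
    using that by (simp add: clinear_add[OF lin] clinear_scaleC[OF lin] scaleC_add_right scaleC_scaleC add.commute)
  have TTh1: "T (T h1) = scaleC (m*m) h1" using TT[of 1 0] by (simp add: lc2_def)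
  have TTh2: "T (T h2) = scaleC (m*m) h2" using TT[of 0 1] by (simp add: lc2_def)
  have TTh1': "T (T h1) = scaleC ((-m)*(-m)) h1" using TTh1 by simp
  have TTh2': "T (T h2) = scaleC ((-m)*(-m)) h2" using TTh2 by simp
  have E1: "T h1 + scaleC k h1 = lc2 (n11 + k) n21 h1 h2" for k
    unfolding T1 lc2_def by (simp add: scaleC_add_left add_ac)
  have E2: "T h2 + scaleC k h2 = lc2 n12 (n22 + k) h1 h2" for k
    unfolding T2 lc2_def by (simp add: scaleC_add_left add_ac)
  obtain v where v: "v \<noteq> 0" "T v = scaleC m v"
  proof (cases "T h1 + scaleC m h1 = 0")
    case True
    then have "n11 + m = 0" "n21 = 0" using ind E1 by metis+
    then have "n22 + m \<noteq> 0" using n22 m0 by auto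
    then have "T h2 + scaleC m h2 \<noteq> 0" using ind E2 by metis
    then show ?thesis using that ev[OF TTh2] by blast
  next
    case False
    then show ?thesis using that ev[OF TTh1] by blast
  qed
  obtain w where w: "w \<noteq> 0" "T w = scaleC (-m) w"
  proof (cases "T h1 + scaleC (-m) h1 = 0")
    case True
    then have "n11 + -m = 0" "n21 = 0" using ind E1 by metis+
    then have "n22 + -m \<noteq> 0" using n22 m0 by auto
    then have "T h2 + scaleC (-m) h2 \<noteq> 0" using ind E2 by metis
    then show ?thesis using that ev[OF TTh2'] by blast
  next
    case False
    then show ?thesis using that ev[OF TTh1'] by blast
  qed
  show ?thesis by (rule periph_two[OF T m0 cube v w])
qed



lemma bfun_add: "bfun g \<Longrightarrow> g (x + y) = g x + g y" unfolding bfun_def by blast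
lemma bfun_scaleC: "bfun g \<Longrightarrow> g (scaleC c x) = c * g x" unfolding bfun_def by blast
lemma bfun_0: "bfun g \<Longrightarrow> g 0 = 0" using bfun_scaleC[of g 0 0] by simp
lemma bfun_minus: "bfun g \<Longrightarrow> g (- x) = - g x"
  using bfun_scaleC[of g "-1" x] by (simp add: scaleC_minus_left)
lemma bfun_diff: "bfun g \<Longrightarrow> g (x - y) = g x - g y"
  by (metis bfun_add bfun_minus diff_conv_add_uminus)
lemma bfun_lc2: "bfun g \<Longrightarrow> g (lc2 a b u v) = a * g u + b * g v"
  by (simp add: lc2_def bfun_add bfun_scaleC)

lemma bfun_comb:
  assumes "bfun g" "bfun h"
  shows "bfun (\<lambda>x. g x - k * h x)"
proof -
  obtain K1 where K1: "\<forall>x. cmod (g x) \<le> K1 * norm x" using assms(1) unfolding bfun_def by blast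
  obtain K2 where K2: "\<forall>x. cmod (h x) \<le> K2 * norm x" using assms(2) unfolding bfun_def by blast
  have "cmod (g x - k * h x) \<le> (K1 + cmod k * K2) * norm x" for x
  proof -
    have "cmod (g x - k * h x) \<le> cmod (g x) + cmod k * cmod (h x)"
      using norm_triangle_ineq4[of "g x" "k * h x"] by (simp add: norm_mult)
    also have "\<dots> \<le> K1 * norm x + cmod k * (K2 * norm x)"
      using K1 K2 by (intro add_mono mult_left_mono) auto
    finally show ?thesis by (simp add: algebra_simps)
  qed
  then have "\<exists>K. \<forall>x. cmod (g x - k * h x) \<le> K * norm x" by blast
  moreover have "\<forall>x y. g (x + y) - k * h (x + y) = (g x - k * h x) + (g y - k * h y)"
    using assms unfolding bfun_def by (auto simp: algebra_simps)
  moreover have "\<forall>c x. g (scaleC c x) - k * h (scaleC c x) = c * (g x - k * h x)"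
    using assms unfolding bfun_def by (auto simp: algebra_simps)
  ultimately show ?thesis unfolding bfun_def by blast
qed

lemma bfun_mult:
  assumes "bfun g"
  shows "bfun (\<lambda>x. k * g x)"
proof -
  have "bfun (\<lambda>x. g x - (1 - k) * g x)" by (rule bfun_comb[OF assms assms])
  moreover have "(\<lambda>x. g x - (1 - k) * g x) = (\<lambda>x. k * g x)" by (simp add: algebra_simps)
  ultimately show ?thesis by simp
qed

definition indep :: "'a::complex_banach \<Rightarrow> 'a \<Rightarrow> bool" where
  "indep u v \<longleftrightarrow> (\<forall>a b. lc2 a b u v = 0 \<longrightarrow> a = 0 \<and> b = 0)"

lemma biorth:
  assumes "indep y1 y2"
  shows "\<exists>h1 h2. bfun h1 \<and> bfun h2 \<and> h1 y1 = 1 \<and> h1 y2 = 0 \<and> h2 y1 = 0 \<and> h2 y2 = 1"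
proof -
  have "y1 \<noteq> 0" using assms unfolding indep_def lc2_def by (metis add_0 one_neq_zero scaleC_zero_left scaleC_zero_right)
  then obtain h where h: "bfun h" "h y1 = 1" using complex_hahn_banach by blast
  define w where "w = lc2 (- h y2) 1 y1 y2"
  have "w \<noteq> 0" using assms unfolding indep_def w_def by fastforce
  then obtain k where k: "bfun k" "k w = 1" using complex_hahn_banach by blast
  have kw: "k y2 - h y2 * k y1 = 1" using k unfolding w_def by (simp add: bfun_lc2)
  define h2 where "h2 x = k x - k y1 * h x" for x
  define h1 where "h1 x = h x - h y2 * h2 x" for x
  have b2: "bfun h2" unfolding h2_def by (rule bfun_comb[OF k(1) h(1)])
  have b1: "bfun h1" unfolding h1_def by (rule bfun_comb[OF h(1) b2])
  have "h2 y1 = 0" "h2 y2 = 1" using h kw by (simp_all add: h2_def algebra_simps)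
  moreover then have "h1 y1 = 1" "h1 y2 = 0" using h by (simp_all add: h1_def)
  ultimately show ?thesis using b1 b2 by blast
qed

lemma cspan_mono: "F \<subseteq> G \<Longrightarrow> cspan F \<subseteq> cspan G"
  unfolding cspan_def by blast

lemma cspan_single: "x \<in> cspan {u} \<Longrightarrow> \<exists>c. x = scaleC c u"
proof -
  assume "x \<in> cspan {u}"
  then obtain F c where F: "finite F" "F \<subseteq> {u}" "x = (\<Sum>v\<in>F. scaleC (c v) v)"
    unfolding cspan_def by blast
  then have "F = {} \<or> F = {u}" by blast
  then show ?thesis
  proof
    assume "F = {}" then show ?thesis using F by (intro exI[of _ 0]) simp
  next
    assume "F = {u}" then show ?thesis using F by (intro exI[of _ "c u"]) simp
  qed
qed

lemma scaleC_in_cspan: "scaleC c u \<in> cspan {u}"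
  unfolding cspan_def by (rule CollectI, rule exI[of _ "{u}"], rule exI[of _ "\<lambda>_. c"]) simp

lemma lc2_in_cspan:
  assumes "u \<noteq> v"
  shows "lc2 a b u v \<in> cspan {u, v}"
  unfolding cspan_def
proof (rule CollectI, rule exI[of _ "{u,v}"], rule exI[of _ "\<lambda>x. if x = u then a else b"])
  show "finite {u, v} \<and> {u, v} \<subseteq> {u, v} \<and>
    lc2 a b u v = (\<Sum>x\<in>{u, v}. scaleC (if x = u then a else b) x)"
    using assms by (simp add: lc2_def)
qed

lemma rank_le_0: "rank_le T 0 \<Longrightarrow> T = (\<lambda>x. 0)"
proof -
  assume "rank_le T 0"
  then obtain F where "finite F" "card F \<le> 0" "range T \<subseteq> cspan F" unfolding rank_le_def by blast
  then have "range T \<subseteq> cspan {}" by simp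
  moreover have "cspan {} = {0::'a}" unfolding cspan_def by auto
  ultimately show ?thesis by auto
qed

lemma rank_le_1:
  assumes "rank_le T 1"
  shows "\<exists>u. \<forall>x. \<exists>c. T x = scaleC c u"
proof -
  obtain F where F: "finite F" "card F \<le> 1" "range T \<subseteq> cspan F" using assms unfolding rank_le_def by blast
  obtain u where "F \<subseteq> {u}"
  proof (cases "F = {}")
    case True then show ?thesis using that by blast
  next
    case False
    then obtain u where "u \<in> F" by blast
    then have "F = {u}" using F card_le_Suc0_iff_eq[of F] by auto
    then show ?thesis using that by blast
  qed
  then have "range T \<subseteq> cspan {u}" using F cspan_mono by blast
  then show ?thesis using cspan_single by blast
qed

lemma rank_two_vectors:
  assumes "A \<noteq> (\<lambda>x. 0)" "\<not> rank_one A"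
  shows "\<exists>x1 x2. indep (A x1) (A x2)"
proof -
  have nr1: "\<not> rank_le A 1" using assms rank_le_0 unfolding rank_one_def by blast
  obtain x1 where x1: "A x1 \<noteq> 0" using assms(1) by auto
  have "\<exists>x2. A x2 \<notin> cspan {A x1}"
  proof (rule ccontr)
    assume "\<not> ?thesis"
    then have "range A \<subseteq> cspan {A x1}" by auto
    then have "rank_le A 1" unfolding rank_le_def by (intro exI[of _ "{A x1}"]) simp
    then show False using nr1 by blast
  qed
  then obtain x2 where x2: "A x2 \<notin> cspan {A x1}" by blast
  have "indep (A x1) (A x2)" unfolding indep_def
  proof (intro allI impI)
    fix a b assume eq: "lc2 a b (A x1) (A x2) = 0"
    have b0: "b = 0"
    proof (rule ccontr)
      assume b: "b \<noteq> 0"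
      have "scaleC b (A x2) = - scaleC a (A x1)" using eq unfolding lc2_def
        by (simp add: eq_neg_iff_add_eq_0 add.commute)
      then have "scaleC (1/b) (scaleC b (A x2)) = scaleC (1/b) (- scaleC a (A x1))" by simp
      then have "A x2 = scaleC (- (a/b)) (A x1)" using b
        by (simp add: scaleC_scaleC scaleC_minus_right scaleC_minus_left)
      then show False using x2 scaleC_in_cspan by metis
    qed
    then have "scaleC a (A x1) = 0" using eq by (simp add: lc2_def)
    then show "a = 0 \<and> b = 0" using x1 b0 scaleC_eq_0_iff by blast
  qed
  then show ?thesis by blast
qed



lemma alg_choice:
  fixes L11 L12 L21 L22 H11 H12 H21 H22 K11 K12 K21 K22 :: complex
  assumes K11: "K11 = 1 - H11 * L11 - H21 * L12" and K12: "K12 = 0 - H12 * L11 - H22 * L12"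
    and K21: "K21 = 0 - H11 * L21 - H21 * L22" and K22: "K22 = 1 - H12 * L21 - H22 * L22"
  shows "\<exists>p q r t. (L11 + p*K11 + q*K12) * (L22 + r*K21 + t*K22)
                 - (L12 + r*K11 + t*K12) * (L21 + p*K21 + q*K22) \<noteq> 0"
proof (cases "L11 * L22 - L12 * L21 = 0")
  case False
  then show ?thesis by (intro exI[of _ 0]) simp
next
  case dL: True
  show ?thesis
  proof (cases "L22 \<noteq> 0")
    case True
    have "(L11 + 1*K11 + 0*K12) * (L22 + 0*K21 + 0*K22)
                 - (L12 + 0*K11 + 0*K12) * (L21 + 1*K21 + 0*K22) = L22"
      using dL unfolding K11 K12 K21 K22 by algebra
    then show ?thesis using True by metis
  next
    case n22: False
    show ?thesis
    proof (cases "L11 \<noteq> 0")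
      case True
      have "(L11 + 0*K11 + 0*K12) * (L22 + 0*K21 + 1*K22)
                   - (L12 + 0*K11 + 1*K12) * (L21 + 0*K21 + 0*K22) = L11"
        using dL unfolding K11 K12 K21 K22 by algebra
      then show ?thesis using True by metis
    next
      case n11: False
      show ?thesis
      proof (cases "L12 \<noteq> 0")
        case True
        have "(L11 + 0*K11 + 1*K12) * (L22 + 0*K21 + 0*K22)
                     - (L12 + 0*K11 + 0*K12) * (L21 + 0*K21 + 1*K22) = - L12"
          using dL unfolding K11 K12 K21 K22 by algebra
        then show ?thesis using True by (metis neg_equal_0_iff_equal)
      next
        case n12: False
        show ?thesis
        proof (cases "L21 \<noteq> 0")
          case True
          have "(L11 + 0*K11 + 0*K12) * (L22 + 1*K21 + 0*K22)
                       - (L12 + 1*K11 + 0*K12) * (L21 + 0*K21 + 0*K22) = - L21"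
            using dL unfolding K11 K12 K21 K22 by algebra
          then show ?thesis using True by (metis neg_equal_0_iff_equal)
        next
          case False
          have "(L11 + 1*K11 + 0*K12) * (L22 + 0*K21 + 1*K22)
                       - (L12 + 0*K11 + 1*K12) * (L21 + 1*K21 + 0*K22) = 1"
            using False n11 n12 n22 unfolding K11 K12 K21 K22 by simp
          then show ?thesis by (metis one_neq_zero)
        qed
      qed
    qed
  qed
qed

lemma step1:
  assumes A: "clinear A" and h1: "bfun h1" and h2: "bfun h2"
    and hy: "h1 y1 = 1" "h1 y2 = 0" "h2 y1 = 0" "h2 y2 = 1"
    and x: "A x1 = y1" "A x2 = y2"
  shows "\<exists>e1 e2. h1 e1 = 1 \<and> h2 e1 = 0 \<and> h1 e2 = 0 \<and> h2 e2 = 1 \<and>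
           h1 (A e1) * h2 (A e2) - h1 (A e2) * h2 (A e1) \<noteq> 0"
proof -
  define u1 where "u1 = x1 - scaleC (h1 x1) y1 - scaleC (h2 x1) y2"
  define u2 where "u2 = x2 - scaleC (h1 x2) y1 - scaleC (h2 x2) y2"
  note lin = bfun_add[OF h1] bfun_add[OF h2] bfun_diff[OF h1] bfun_diff[OF h2]
     bfun_scaleC[OF h1] bfun_scaleC[OF h2] clinear_add[OF A] clinear_diff[OF A] clinear_scaleC[OF A]
  have hu: "h1 u1 = 0" "h2 u1 = 0" "h1 u2 = 0" "h2 u2 = 0"
    unfolding u1_def u2_def using hy by (simp_all add: lin)
  define L11 where "L11 = h1 (A y1)"
  define L12 where "L12 = h1 (A y2)"
  define L21 where "L21 = h2 (A y1)"
  define L22 where "L22 = h2 (A y2)"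
  define K11 where "K11 = 1 - h1 x1 * L11 - h2 x1 * L12"
  define K12 where "K12 = 0 - h1 x2 * L11 - h2 x2 * L12"
  define K21 where "K21 = 0 - h1 x1 * L21 - h2 x1 * L22"
  define K22 where "K22 = 1 - h1 x2 * L21 - h2 x2 * L22"
  have hAu: "h1 (A u1) = K11" "h1 (A u2) = K12" "h2 (A u1) = K21" "h2 (A u2) = K22"
    unfolding u1_def u2_def K11_def K12_def K21_def K22_def L11_def L12_def L21_def L22_def
    using hy x by (simp_all add: lin)
  obtain p q r t where det: "(L11 + p*K11 + q*K12) * (L22 + r*K21 + t*K22)
                 - (L12 + r*K11 + t*K12) * (L21 + p*K21 + q*K22) \<noteq> 0"
    using alg_choice[OF K11_def K12_def K21_def K22_def] by blast
  define e1 where "e1 = y1 + scaleC p u1 + scaleC q u2"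
  define e2 where "e2 = y2 + scaleC r u1 + scaleC t u2"
  have "h1 e1 = 1" "h2 e1 = 0" "h1 e2 = 0" "h2 e2 = 1"
    unfolding e1_def e2_def using hy hu by (simp_all add: lin)
  moreover have "h1 (A e1) = L11 + p*K11 + q*K12" "h2 (A e1) = L21 + p*K21 + q*K22"
    "h1 (A e2) = L12 + r*K11 + t*K12" "h2 (A e2) = L22 + r*K21 + t*K22"
    unfolding e1_def e2_def using hAu by (simp_all add: lin L11_def L12_def L21_def L22_def)
  ultimately show ?thesis using det by metis
qed

lemma shear_choice:
  fixes a b c d :: complex
  assumes "a*d - b*c \<noteq> 0"
  shows "\<exists>k. (a + k*b = 0 \<and> d - k*b = 0) \<or> (a + k*b \<noteq> 0 \<and> d - k*b \<noteq> 0)"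
proof (cases "a + d = 0")
  case True
  then show ?thesis by (intro exI[of _ 0]) (auto simp: add_eq_0_iff)
next
  case tr: False
  show ?thesis
  proof (cases "b = 0")
    case True
    then show ?thesis using assms by (intro exI[of _ 0]) auto
  next
    case False
    define k where "k = (d - a)/(2*b)"
    have e1: "a + k*b = (a + d)/2" "d - k*b = (a + d)/2"
      using False by (simp_all add: field_simps k_def)
    have "(a + d)/2 \<noteq> 0" using tr by simp
    then have "a + k*b \<noteq> 0 \<and> d - k*b \<noteq> 0" by (simp only: e1 simp_thms)
    then show ?thesis by blast
  qed
qed

lemma shear:
  assumes A: "clinear A" and g1: "bfun g1" and g2: "bfun g2"
    and bo: "g1 e1 = 1" "g2 e1 = 0" "g1 e2 = 0" "g2 e2 = 1"
    and dt: "g1 (A e1) * g2 (A e2) - g1 (A e2) * g2 (A e1) \<noteq> 0"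
  shows "\<exists>e1' e2' g1' g2' a' b'. bfun g1' \<and> bfun g2' \<and>
     g1' e1' = 1 \<and> g2' e1' = 0 \<and> g1' e2' = 0 \<and> g2' e2' = 1 \<and>
     g1' (A e1') * g2' (A e2') - g1' (A e2') * g2' (A e1') \<noteq> 0 \<and>
     a' \<noteq> 0 \<and> b' \<noteq> 0 \<and> a' * g1' (A e1') + b' * g2' (A e2') = 0"
proof -
  define a where "a = g1 (A e1)"
  define b where "b = g1 (A e2)"
  define c where "c = g2 (A e1)"
  define d where "d = g2 (A e2)"
  obtain k where k: "(a + k*b = 0 \<and> d - k*b = 0) \<or> (a + k*b \<noteq> 0 \<and> d - k*b \<noteq> 0)"
    using shear_choice[of a d b c] dt unfolding a_def b_def c_def d_def by (auto simp: mult.commute)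
  define e1' where "e1' = e1 + scaleC k e2"
  define g2' where "g2' x = g2 x - k * g1 x" for x
  note lin = bfun_add[OF g1] bfun_add[OF g2] bfun_scaleC[OF g1] bfun_scaleC[OF g2]
    clinear_add[OF A] clinear_scaleC[OF A]
  have bg2: "bfun g2'" unfolding g2'_def by (rule bfun_comb[OF g2 g1])
  have bo': "g1 e1' = 1" "g2' e1' = 0" "g1 e2 = 0" "g2' e2 = 1"
    unfolding e1'_def g2'_def using bo by (simp_all add: lin)
  have G: "g1 (A e1') = a + k*b" "g2' (A e2) = d - k*b" "g1 (A e2) = b"
     "g2' (A e1') = c + k*d - k*(a + k*b)"
    unfolding e1'_def g2'_def a_def b_def c_def d_def by (simp_all add: lin algebra_simps)
  have dt': "g1 (A e1') * g2' (A e2) - g1 (A e2) * g2' (A e1') = a*d - b*c"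
    unfolding G by (simp add: algebra_simps)
  have dne: "a*d - b*c \<noteq> 0" using dt unfolding a_def b_def c_def d_def by (simp add: mult.commute)
  obtain a' b' where ab: "a' \<noteq> 0" "b' \<noteq> 0" "a' * (a + k*b) + b' * (d - k*b) = 0"
  proof (cases "a + k*b = 0 \<and> d - k*b = 0")
    case True then show ?thesis using that[of 1 1] by simp
  next
    case False
    then have "a + k*b \<noteq> 0" "d - k*b \<noteq> 0" using k by auto
    moreover have "(d - k*b) * (a + k*b) + (-(a + k*b)) * (d - k*b) = 0" by (simp add: algebra_simps)
    ultimately show ?thesis using that[of "d - k*b" "-(a + k*b)"] by (simp only: neg_equal_0_iff_equal simp_thms)
  qed
  show ?thesis
    apply (rule exI[of _ e1'], rule exI[of _ e2], rule exI[of _ g1], rule exI[of _ g2'],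
           rule exI[of _ a'], rule exI[of _ b'])
    using g1 bg2 bo' dt' dne ab G by simp
qed

lemma complex_root:
  assumes "n \<ge> 1"
  shows "\<exists>z::complex. z ^ n = w"
proof (cases "w = 0")
  case True
  then show ?thesis using assms by (intro exI[of _ 0]) (simp add: power_0_left)
next
  case False
  have "exp (Ln w / of_nat n) ^ n = exp (of_nat n * (Ln w / of_nat n))"
    by (rule exp_of_nat_mult[symmetric])
  also have "\<dots> = exp (Ln w)" using assms by simp
  also have "\<dots> = w" using False by simp
  finally show ?thesis by blast
qed



lemma final_construct:
  assumes std: "standard_operator_algebra \<A>" and A: "bounded_clinear A" and rs: "r + s \<ge> 1"
    and g1: "bfun g1" and g2: "bfun g2"
    and bo: "g1 e1 = 1" "g2 e1 = 0" "g1 e2 = 0" "g2 e2 = 1"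
    and dt: "g1 (A e1) * g2 (A e2) - g1 (A e2) * g2 (A e1) \<noteq> 0"
    and ab: "a' \<noteq> 0" "b' \<noteq> 0" "a' * g1 (A e1) + b' * g2 (A e2) = 0"
  shows "\<exists>B\<in>\<A>. rank_le B 2 \<and> \<not> (\<exists>z. peripheral_spectrum ((B ^^ r) \<circ> A \<circ> (B ^^ s)) = {z})"
proof -
  obtain \<alpha> where al: "\<alpha> ^ (r + s) = a'" using complex_root[OF rs] by blast
  obtain \<beta> where be: "\<beta> ^ (r + s) = b'" using complex_root[OF rs] by blast
  have al0: "\<alpha> \<noteq> 0" using al ab rs by (metis power_0_left not_one_le_zero)
  have be0: "\<beta> \<noteq> 0" using be ab rs by (metis power_0_left not_one_le_zero)
  define G11 where "G11 = g1 (A e1)"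
  define G12 where "G12 = g1 (A e2)"
  define G21 where "G21 = g2 (A e1)"
  define G22 where "G22 = g2 (A e2)"
  have linA: "clinear A" using A bcl_clinear by blast
  define B where "B x = lc2 (\<alpha> * g1 x) (\<beta> * g2 x) e1 e2" for x
  have bB: "bounded_clinear B" unfolding B_def lc2_def
    by (intro bcl_add bcl_rank1 bfun_mult g1 g2)
  have e12: "e1 \<noteq> e2" using bo by auto
  have rk: "rank_le B 2" unfolding rank_le_def
  proof (intro exI[of _ "{e1, e2}"] conjI)
    show "card {e1, e2} \<le> 2" using e12 by simp
    show "range B \<subseteq> cspan {e1, e2}" unfolding B_def using lc2_in_cspan[OF e12] by blast
  qed simp
  have BA: "B \<in> \<A>" using std bB rk unfolding standard_operator_algebra_def finite_rank_def by blast
  have gl1: "g1 (lc2 a b e1 e2) = a" for a b using bo by (simp add: bfun_lc2[OF g1])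
  have gl2: "g2 (lc2 a b e1 e2) = b" for a b using bo by (simp add: bfun_lc2[OF g2])
  have Bp: "(B ^^ Suc k) x = lc2 (\<alpha> ^ Suc k * g1 x) (\<beta> ^ Suc k * g2 x) e1 e2" for k x
  proof (induction k)
    case 0 then show ?case by (simp add: B_def)
  next
    case (Suc k)
    have "(B ^^ Suc (Suc k)) x = B ((B ^^ Suc k) x)" by simp
    also have "\<dots> = lc2 (\<alpha> ^ Suc (Suc k) * g1 x) (\<beta> ^ Suc (Suc k) * g2 x) e1 e2"
      unfolding Suc B_def gl1 gl2 by (simp add: mult.assoc)
    finally show ?case .
  qed
  have Ae: "A (lc2 a b e1 e2) = lc2 a b (A e1) (A e2)" for a b by (rule clinear_lc2[OF linA])
  have ind_e: "lc2 a b e1 e2 = 0 \<Longrightarrow> a = 0 \<and> b = 0" for a b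
    using gl1[of a b] gl2[of a b] bfun_0[OF g1] bfun_0[OF g2] by metis
  have dtG: "G11 * G22 - G12 * G21 \<noteq> 0" using dt unfolding G11_def G12_def G21_def G22_def .
  have trG: "a' * G11 + b' * G22 = 0" using ab unfolding G11_def G22_def by simp
  define T where "T = (B ^^ r) \<circ> A \<circ> (B ^^ s)"
  have bT: "bounded_clinear T" unfolding T_def
    by (intro bcl_comp' bcl_funpow bB A)
  have "\<not> (\<exists>z. peripheral_spectrum T = {z})"
  proof (cases r)
    case 0
    then obtain s' where s: "s = Suc s'" using rs by (cases s) auto
    have Tx: "T x = lc2 (\<alpha> ^ s * g1 x) (\<beta> ^ s * g2 x) (A e1) (A e2)" for x
      unfolding T_def 0 using Bp[of s', folded s] Ae by simp
    have T1: "T (A e1) = lc2 (\<alpha> ^ s * G11) (\<beta> ^ s * G21) (A e1) (A e2)"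
      unfolding Tx G11_def G21_def ..
    have T2: "T (A e2) = lc2 (\<alpha> ^ s * G12) (\<beta> ^ s * G22) (A e1) (A e2)"
      unfolding Tx G12_def G22_def ..
    have ind: "a = 0 \<and> b = 0" if "lc2 a b (A e1) (A e2) = 0" for a b
    proof -
      have "g1 (lc2 a b (A e1) (A e2)) = 0" "g2 (lc2 a b (A e1) (A e2)) = 0"
        using that bfun_0 g1 g2 by auto
      then have q: "a * G11 + b * G12 = 0" "a * G21 + b * G22 = 0"
        by (simp_all add: bfun_lc2[OF g1] bfun_lc2[OF g2] G11_def G12_def G21_def G22_def)
      have "a * (G11 * G22 - G12 * G21) = 0" "b * (G11 * G22 - G12 * G21) = 0"
        using q by algebra+
      then show ?thesis using dtG by simp
    qed
    show ?thesis
    proof (rule periph_2d[OF bT ind _ T1 T2])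
      show "\<exists>c d. T x = lc2 c d (A e1) (A e2)" for x using Tx by blast
      show "\<alpha> ^ s * G11 + \<beta> ^ s * G22 = 0" using trG al be 0 by simp
      show "\<alpha> ^ s * G11 * (\<beta> ^ s * G22) - \<alpha> ^ s * G12 * (\<beta> ^ s * G21) \<noteq> 0"
      proof -
        have "\<alpha> ^ s * G11 * (\<beta> ^ s * G22) - \<alpha> ^ s * G12 * (\<beta> ^ s * G21)
              = \<alpha> ^ s * \<beta> ^ s * (G11 * G22 - G12 * G21)" by (simp add: algebra_simps)
        then show ?thesis using dtG al0 be0 by simp
      qed
    qed
  next
    case (Suc r')
    note r = Suc
    show ?thesis
    proof (cases s)
      case 0
      have Tx: "T x = lc2 (\<alpha> ^ r * g1 (A x)) (\<beta> ^ r * g2 (A x)) e1 e2" for x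
        unfolding T_def 0 using Bp[of r', folded r] by simp
      have T1: "T e1 = lc2 (\<alpha> ^ r * G11) (\<beta> ^ r * G21) e1 e2"
        unfolding Tx G11_def G21_def ..
      have T2: "T e2 = lc2 (\<alpha> ^ r * G12) (\<beta> ^ r * G22) e1 e2"
        unfolding Tx G12_def G22_def ..
      show ?thesis
      proof (rule periph_2d[OF bT ind_e _ T1 T2])
        show "\<exists>c d. T x = lc2 c d e1 e2" for x using Tx by blast
        show "\<alpha> ^ r * G11 + \<beta> ^ r * G22 = 0" using trG al be 0 by simp
        show "\<alpha> ^ r * G11 * (\<beta> ^ r * G22) - \<alpha> ^ r * G12 * (\<beta> ^ r * G21) \<noteq> 0"
        proof -
          have "\<alpha> ^ r * G11 * (\<beta> ^ r * G22) - \<alpha> ^ r * G12 * (\<beta> ^ r * G21)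
                = \<alpha> ^ r * \<beta> ^ r * (G11 * G22 - G12 * G21)" by (simp add: algebra_simps)
          then show ?thesis using dtG al0 be0 by simp
        qed
      qed
    next
      case (Suc s')
      note s = Suc
      have Tx: "T x = lc2 (\<alpha> ^ r * g1 (A ((B ^^ s) x))) (\<beta> ^ r * g2 (A ((B ^^ s) x))) e1 e2" for x
        unfolding T_def using Bp[of r', folded r] by simp
      have Bs1: "(B ^^ s) e1 = lc2 (\<alpha> ^ s) 0 e1 e2" using Bp[of s', folded s] bo by simp
      have Bs2: "(B ^^ s) e2 = lc2 0 (\<beta> ^ s) e1 e2" using Bp[of s', folded s] bo by simp
      have T1: "T e1 = lc2 (\<alpha> ^ r * (\<alpha> ^ s * G11)) (\<beta> ^ r * (\<alpha> ^ s * G21)) e1 e2"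
        unfolding Tx Bs1 Ae by (simp add: bfun_lc2[OF g1] bfun_lc2[OF g2] G11_def G21_def)
      have T2: "T e2 = lc2 (\<alpha> ^ r * (\<beta> ^ s * G12)) (\<beta> ^ r * (\<beta> ^ s * G22)) e1 e2"
        unfolding Tx Bs2 Ae by (simp add: bfun_lc2[OF g1] bfun_lc2[OF g2] G12_def G22_def)
      show ?thesis
      proof (rule periph_2d[OF bT ind_e _ T1 T2])
        show "\<exists>c d. T x = lc2 c d e1 e2" for x using Tx by blast
        have "\<alpha> ^ r * (\<alpha> ^ s * G11) + \<beta> ^ r * (\<beta> ^ s * G22) = \<alpha> ^ (r + s) * G11 + \<beta> ^ (r + s) * G22"
          by (simp add: power_add mult.assoc)
        then show "\<alpha> ^ r * (\<alpha> ^ s * G11) + \<beta> ^ r * (\<beta> ^ s * G22) = 0" using trG al be by simp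
        have "\<alpha> ^ r * (\<alpha> ^ s * G11) * (\<beta> ^ r * (\<beta> ^ s * G22)) - \<alpha> ^ r * (\<beta> ^ s * G12) * (\<beta> ^ r * (\<alpha> ^ s * G21))
              = \<alpha> ^ r * \<alpha> ^ s * \<beta> ^ r * \<beta> ^ s * (G11 * G22 - G12 * G21)" by (simp add: algebra_simps)
        then show "\<alpha> ^ r * (\<alpha> ^ s * G11) * (\<beta> ^ r * (\<beta> ^ s * G22)) - \<alpha> ^ r * (\<beta> ^ s * G12) * (\<beta> ^ r * (\<alpha> ^ s * G21)) \<noteq> 0"
          using dtG al0 be0 by simp
      qed
    qed
  qed
  then show ?thesis using BA rk unfolding T_def by blast
qed

lemma partA:
  fixes A :: "'a::complex_banach \<Rightarrow> 'a"
  assumes dim: "cdim_ge2 TYPE('a)" and std: "standard_operator_algebra \<A>"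
    and A: "bounded_clinear A" and r1: "rank_one A" and B: "B \<in> \<A>"
  shows "\<exists>z. peripheral_spectrum ((B ^^ r) \<circ> A \<circ> (B ^^ s)) = {z}"
proof -
  obtain u where u: "\<And>x. \<exists>c. A x = scaleC c u" using rank_le_1 r1 unfolding rank_one_def by blast
  have bB: "bounded_clinear B" using std B unfolding standard_operator_algebra_def by blast
  define T where "T = (B ^^ r) \<circ> A \<circ> (B ^^ s)"
  have bT: "bounded_clinear T" unfolding T_def by (intro bcl_comp' bcl_funpow bB A)
  have linT: "clinear T" using bT bcl_clinear by blast
  have linR: "clinear (B ^^ r)" using bcl_funpow[OF bB] bcl_clinear by blast
  define v where "v = (B ^^ r) u"
  have Tx: "\<exists>c. T x = scaleC c v" for x
  proof -
    obtain c where "A ((B ^^ s) x) = scaleC c u" using u by blast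
    then have "T x = scaleC c v" unfolding T_def v_def by (simp add: clinear_scaleC[OF linR])
    then show ?thesis by blast
  qed
  obtain l where l: "T v = scaleC l v" using Tx by blast
  have sq: "T (T y) = scaleC l (T y)" for y
  proof -
    obtain c where c: "T y = scaleC c v" using Tx by blast
    show ?thesis unfolding c clinear_scaleC[OF linT] l by (simp add: scaleC_scaleC mult.commute)
  qed
  have R: "range T \<noteq> UNIV"
  proof
    assume "range T = UNIV"
    then have "UNIV \<subseteq> cspan {v}" using Tx scaleC_in_cspan by (metis rangeE subsetI)
    moreover have "finite {v} \<and> card {v} \<le> 1" by simp
    ultimately show False using dim unfolding cdim_ge2_def by blast
  qed
  show ?thesis using periph_rank1[OF bT R sq] unfolding T_def .
qed

theorem lemma2p3:
  fixes \<A> :: "('a::complex_banach \<Rightarrow> 'a) set"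
    and A :: "'a \<Rightarrow> 'a" and r s :: nat
  assumes "cdim_ge2 TYPE('a)"
    and "standard_operator_algebra \<A>"
    and "r + s \<ge> 1"
    and "A \<in> \<A>" and "A \<noteq> (\<lambda>x. 0)"
  shows "(rank_one A \<longleftrightarrow>
            (\<forall>B\<in>\<A>. \<exists>z. peripheral_spectrum ((B ^^ r) \<circ> A \<circ> (B ^^ s)) = {z}))
       \<and> (rank_one A \<longleftrightarrow>
            (\<forall>B\<in>\<A>. rank_le B 2 \<longrightarrow>
               (\<exists>z. peripheral_spectrum ((B ^^ r) \<circ> A \<circ> (B ^^ s)) = {z})))"
proof -
  have bA: "bounded_clinear A" using assms(2,4) unfolding standard_operator_algebra_def by blast
  have linA: "clinear A" using bA bcl_clinear by blast
  have PA: "\<forall>B\<in>\<A>. \<exists>z. peripheral_spectrum ((B ^^ r) \<circ> A \<circ> (B ^^ s)) = {z}" if "rank_one A"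
    using partA[OF assms(1,2) bA that] by blast
  have PB: "\<exists>B\<in>\<A>. rank_le B 2 \<and> \<not> (\<exists>z. peripheral_spectrum ((B ^^ r) \<circ> A \<circ> (B ^^ s)) = {z})"
    if nr: "\<not> rank_one A"
  proof -
    obtain x1 x2 where ind: "indep (A x1) (A x2)" using rank_two_vectors[OF assms(5) nr] by blast
    obtain h1 h2 where h: "bfun h1" "bfun h2" "h1 (A x1) = 1" "h1 (A x2) = 0" "h2 (A x1) = 0" "h2 (A x2) = 1"
      using biorth[OF ind] by blast
    obtain e1 e2 where e: "h1 e1 = 1" "h2 e1 = 0" "h1 e2 = 0" "h2 e2 = 1"
        "h1 (A e1) * h2 (A e2) - h1 (A e2) * h2 (A e1) \<noteq> 0"
      using step1[OF linA h(1,2) h(3-6) refl refl] by blast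
    obtain e1' e2' g1' g2' a' b' where sh: "bfun g1'" "bfun g2'"
      "g1' e1' = 1" "g2' e1' = 0" "g1' e2' = 0" "g2' e2' = 1"
      "g1' (A e1') * g2' (A e2') - g1' (A e2') * g2' (A e1') \<noteq> 0"
      "a' \<noteq> 0" "b' \<noteq> 0" "a' * g1' (A e1') + b' * g2' (A e2') = 0"
      using shear[OF linA h(1,2) e] by blast
    show ?thesis by (rule final_construct[OF assms(2) bA assms(3) sh])
  qed
  show ?thesis using PA PB by blast
qed

end
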